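(* For integers $k>n\ge0$ and real $u\ge k$, $$I_{k,n}(u):=\int_k^u P_{k-n-1}(x-n-1)\,\frac{F_n(x)\,dx}{x-n}=\sum_{j=0}^{n}(-1)^{n-j}\,P_{k-j}(u-j)\,F_j(u).$$
   Context: The functions $P_k$ are defined by $P_0(u)=1$ for $u\ge 0$, and for integers $k\ge1$, $P_k:[k,\infty)\to\mathbb{R}$ is the function with $P_k(k)=0$ and $uP_k'(u)=P_{k-1}(u-1)$ for $u\ge k$. The auxiliary functions $F_k$ are defined by $F_0(u)=1$ for $u\ge0$, and for integers $k\ge1$, $F_k:[k,\infty)\to\mathbb{R}$ is the function with $F_k(k)=0$ and $(u-k+1)F_k'(u)=F_{k-1}(u)$ for $u\ge k$, i.e. $F_k(u)=\int_k^u F_{k-1}(x)\,\frac{dx}{x-k+1}$ (so $F_1(u)=\log u$). *)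

theory Defs
  imports "HOL-Analysis.Analysis"
begin

text \<open>P k is the function with P k k = 0 and u * P k' u = P (k-1) (u-1) for u >= k,
  i.e. P k u = integral over [k,u] of P (k-1) (t-1) / t.  Only values on [k, inf) matter.\<close>
primrec P :: "nat \<Rightarrow> real \<Rightarrow> real" where
  "P 0 u = 1"
| "P (Suc k) u = integral {real (Suc k)..u} (\<lambda>t. P k (t - 1) / t)"

primrec F :: "nat \<Rightarrow> real \<Rightarrow> real" where
  "F 0 u = 1"
| "F (Suc k) u = integral {real (Suc k)..u} (\<lambda>x. F k x / (x - real (Suc k) + 1))"

end

theory Submission
  imports Defs
begin

lemma P_fun: "P (Suc m) = (\<lambda>u. integral {real (Suc m)..u} (\<lambda>t. P m (t - 1) / t))"
  by (rule ext) simp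

lemma F_fun: "F (Suc m) = (\<lambda>u. integral {real (Suc m)..u} (\<lambda>x. F m x / (x - real (Suc m) + 1)))"
  by (rule ext) simp

lemma P_deriv:
  assumes "continuous_on {real (Suc m)..b} (\<lambda>t. P m (t - 1) / t)" "x \<in> {real (Suc m)..b}"
  shows "(P (Suc m) has_real_derivative P m (x - 1) / x) (at x within {real (Suc m)..b})"
  unfolding P_fun has_real_derivative_iff_has_vector_derivative
  by (rule integral_has_vector_derivative[OF assms])

lemma F_deriv:
  assumes "continuous_on {real (Suc m)..b} (\<lambda>x. F m x / (x - real (Suc m) + 1))" "x \<in> {real (Suc m)..b}"
  shows "(F (Suc m) has_real_derivative F m x / (x - real (Suc m) + 1)) (at x within {real (Suc m)..b})"
  unfolding F_fun has_real_derivative_iff_has_vector_derivative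
  by (rule integral_has_vector_derivative[OF assms])

lemma P_cont: "continuous_on {real m..b} (P m)"
proof (induction m arbitrary: b)
  case 0
  have "P 0 = (\<lambda>_. 1)" by (rule ext) simp
  then show ?case by (simp only: continuous_on_const)
next
  case (Suc m)
  have c1: "continuous_on {real (Suc m)..b} (\<lambda>t. P m (t - 1))"
    by (rule continuous_on_compose2[OF Suc.IH[of "b - 1"] continuous_on_diff[OF continuous_on_id continuous_on_const]]) auto
  have c: "continuous_on {real (Suc m)..b} (\<lambda>t. P m (t - 1) / t)"
    by (rule continuous_on_divide[OF c1 continuous_on_id]) auto
  show ?case by (rule DERIV_continuous_on[OF P_deriv[OF c]])
qed

lemma F_cont: "continuous_on {real m..b} (F m)"
proof (induction m arbitrary: b)
  case 0
  have "F 0 = (\<lambda>_. 1)" by (rule ext) simp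
  then show ?case by (simp only: continuous_on_const)
next
  case (Suc m)
  have c1: "continuous_on {real (Suc m)..b} (F m)"
    by (rule continuous_on_subset[OF Suc.IH[of b]]) auto
  have c: "continuous_on {real (Suc m)..b} (\<lambda>x. F m x / (x - real (Suc m) + 1))"
    by (rule continuous_on_divide[OF c1 continuous_on_add[OF continuous_on_diff[OF continuous_on_id continuous_on_const] continuous_on_const]]) auto
  show ?case by (rule DERIV_continuous_on[OF F_deriv[OF c]])
qed

lemma P_deriv': "x \<in> {real (Suc m)..b} \<Longrightarrow> (P (Suc m) has_real_derivative P m (x - 1) / x) (at x within {real (Suc m)..b})"
proof (rule P_deriv)
  show "continuous_on {real (Suc m)..b} (\<lambda>t. P m (t - 1) / t)"
    by (rule continuous_on_divide[OF continuous_on_compose2[OF P_cont[of m "b - 1"] continuous_on_diff[OF continuous_on_id continuous_on_const]] continuous_on_id]) auto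
qed

lemma F_deriv': "x \<in> {real (Suc m)..b} \<Longrightarrow> (F (Suc m) has_real_derivative F m x / (x - real (Suc m) + 1)) (at x within {real (Suc m)..b})"
proof (rule F_deriv)
  show "continuous_on {real (Suc m)..b} (\<lambda>x. F m x / (x - real (Suc m) + 1))"
    by (rule continuous_on_divide[OF continuous_on_subset[OF F_cont[of m b]] continuous_on_add[OF continuous_on_diff[OF continuous_on_id continuous_on_const] continuous_on_const]]) auto
qed

declare P.simps(2)[simp del] F.simps(2)[simp del]

lemma main:
  fixes k n :: nat and u :: real
  shows "n < k \<Longrightarrow> real k \<le> u \<Longrightarrow> integral {real k..u} (\<lambda>x. P (k - n - 1) (x - real n - 1) * F n x / (x - real n))
       = (\<Sum>j=0..n. (-1) ^ (n - j) * P (k - j) (u - real j) * F j u)"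
proof (induction n)
  case 0
  then obtain p where k: "k = Suc p" by (cases k) auto
  show ?case by (simp add: k P.simps)
next
  case (Suc n)
  define q where "q = k - n - 2"
  have k: "k = Suc (Suc (n + q))" using Suc.prems unfolding q_def by auto
  have e1: "k - Suc n - 1 = q" "k - n - 1 = Suc q" "k - Suc n = Suc q" using k by auto
  define A where "A x = P q (x - real (Suc n) - 1) * F (Suc n) x / (x - real (Suc n))" for x
  define B where "B x = P (k - n - 1) (x - real n - 1) * F n x / (x - real n)" for x
  define h where "h x = P (Suc q) (x - real (Suc n)) * F (Suc n) x" for x
  have ku: "real k \<le> u" using Suc.prems by simp
  have der: "(h has_vector_derivative (A x + B x)) (at x within {real k..u})" if x: "x \<in> {real k..u}" for x
  proof -
    have d1: "(P (Suc q) has_real_derivative P q ((x - real (Suc n)) - 1) / (x - real (Suc n)))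
        (at (x - real (Suc n)) within {real (Suc q)..u - real (Suc n)})"
    proof -
      have mem: "x - real (Suc n) \<in> {real (Suc q)..u - real (Suc n)}" using x k by auto
      show ?thesis using P_deriv'[OF mem] by simp
    qed
    have d1': "(P (Suc q) has_real_derivative P q ((x - real (Suc n)) - 1) / (x - real (Suc n)))
        (at (x - real (Suc n)) within ((\<lambda>x. x - real (Suc n)) ` {real k..u}))"
      by (rule has_field_derivative_subset[OF d1]) (auto simp: k)
    have dg: "((\<lambda>x. x - real (Suc n)) has_real_derivative 1) (at x within {real k..u})"
    proof -
      have "((\<lambda>x. x - real (Suc n)) has_real_derivative 1 - 0) (at x within {real k..u})"
        by (intro DERIV_diff DERIV_ident DERIV_const)
      then show ?thesis by simp
    qed
    have d2: "((\<lambda>x. P (Suc q) (x - real (Suc n))) has_real_derivative P q ((x - real (Suc n)) - 1) / (x - real (Suc n)) * 1)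
        (at x within {real k..u})"
      using DERIV_image_chain[OF d1' dg] by (simp add: o_def)
    have d3: "(F (Suc n) has_real_derivative F n x / (x - real (Suc n) + 1)) (at x within {real (Suc n)..u})"
    proof -
      have mem: "x \<in> {real (Suc n)..u}" using x k by auto
      show ?thesis using F_deriv'[OF mem] by simp
    qed
    have d3': "(F (Suc n) has_real_derivative F n x / (x - real (Suc n) + 1)) (at x within {real k..u})"
      by (rule has_field_derivative_subset[OF d3]) (auto simp: k)
    note d4 = DERIV_mult[OF d2 d3']
    have eq: "P q ((x - real (Suc n)) - 1) / (x - real (Suc n)) * 1 * F (Suc n) x
        + F n x / (x - real (Suc n) + 1) * P (Suc q) (x - real (Suc n)) = A x + B x"
      unfolding A_def B_def e1 by (simp add: algebra_simps)
    show ?thesis using d4 unfolding eq h_def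
      by (simp add: has_real_derivative_iff_has_vector_derivative)
  qed
  have ftc: "((\<lambda>x. A x + B x) has_integral (h u - h (real k))) {real k..u}"
    by (rule fundamental_theorem_of_calculus[OF ku der])
  have hk: "h (real k) = 0"
    unfolding h_def by (simp add: k P.simps)
  have cP: "continuous_on {real (Suc q)..u} (P (Suc q))"
    by (rule P_cont)
  have cP': "continuous_on {real k..u} (\<lambda>x. P (Suc q) (x - real n - 1))"
    by (rule continuous_on_compose2[OF cP continuous_on_diff[OF continuous_on_diff[OF continuous_on_id continuous_on_const] continuous_on_const]]) (auto simp: k)
  have cF: "continuous_on {real k..u} (F n)"
    by (rule continuous_on_subset[OF F_cont[of n u]]) (auto simp: k)
  have cB: "continuous_on {real k..u} B"
    unfolding B_def e1
    by (rule continuous_on_divide[OF continuous_on_mult[OF cP' cF] continuous_on_diff[OF continuous_on_id continuous_on_const]]) (auto simp: k)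
  have iB: "(B has_integral integral {real k..u} B) {real k..u}"
    using integrable_continuous_interval[OF cB] by (simp add: integrable_integral)
  have iA: "(A has_integral (h u - integral {real k..u} B)) {real k..u}"
    using has_integral_diff[OF ftc iB] hk by simp
  have IH: "integral {real k..u} B = (\<Sum>j=0..n. (-1) ^ (n - j) * P (k - j) (u - real j) * F j u)"
    unfolding B_def using Suc.IH Suc.prems by simp
  have sm: "(\<Sum>j=0..n. (-1) ^ (Suc n - j) * P (k - j) (u - real j) * F j u)
       = - (\<Sum>j=0..n. (-1) ^ (n - j) * P (k - j) (u - real j) * F j u)"
    by (simp add: sum_negf[symmetric] Suc_diff_le)
  have "integral {real k..u} A = h u - integral {real k..u} B"
    using iA by (rule integral_unique)
  also have "\<dots> = (\<Sum>j=0..Suc n. (-1) ^ (Suc n - j) * P (k - j) (u - real j) * F j u)"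
    unfolding IH sum.atLeast0_atMost_Suc sm h_def e1 by simp
  finally show ?case unfolding A_def e1(1) .
qed

theorem theorem6:
  fixes k n :: nat and u :: real
  assumes "n < k" and "real k \<le> u"
  shows "integral {real k..u} (\<lambda>x. P (k - n - 1) (x - real n - 1) * F n x / (x - real n))
       = (\<Sum>j=0..n. (-1) ^ (n - j) * P (k - j) (u - real j) * F j u)"
  by (rule main[OF assms])

end
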